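(* Let $a,b$ be positive integers with $\gcd(a,b)=1$ such that $H_1=\langle a,b\rangle$ is minimally generated by two elements. Let $c\in H_1$ with $c>0$, $c\notin\{a,b\}$, and let $d\in\mathbb{N}$ with $d>1$ and $\gcd(c,d)=1$. Let $H=\langle da,db,c\rangle$ (the gluing of $H_1$ and $\mathbb{N}$ with respect to $d$ and $c$), $k$ a field, and $R=k[H]$. Then $R$ is Gorenstein and $$\#\mathcal{X}_{R}=d(ab-a-b)+(d-1)c+1,$$ where $\mathcal{X}_R$ is the set of graded ideals $I$ of $R$ with $R/I$ Gorenstein and $\mu_R(I)\ge 2$.
   Context: $R=k[H]=k[t^h\mid h\in H]\subseteq k[t]$ graded by $\deg t=1$; graded ideals are homogeneous ideals for this grading; $\mu_R(I)$ is the minimal number of generators. *)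

theory Defs
  imports "HOL-Computational_Algebra.Polynomial"
begin

definition sg2 :: "nat \<Rightarrow> nat \<Rightarrow> nat set" where
  "sg2 a b = {i * a + j * b | i j. True}"

definition sg3 :: "nat \<Rightarrow> nat \<Rightarrow> nat \<Rightarrow> nat set" where
  "sg3 a b c = {i * a + j * b + l * c | i j l. True}"

definition min_gens :: "nat set \<Rightarrow> nat set" where
  "min_gens S = {s \<in> S. s \<noteq> 0 \<and> \<not> (\<exists>x y. x \<in> S \<and> y \<in> S \<and> x \<noteq> 0 \<and> y \<noteq> 0 \<and> s = x + y)}"

definition sgring :: "nat set \<Rightarrow> 'k::field poly set" where
  "sgring H = {p. \<forall>n. coeff p n \<noteq> 0 \<longrightarrow> n \<in> H}"

definition max_ideal :: "nat set \<Rightarrow> 'k::field poly set" where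
  "max_ideal H = {p \<in> sgring H. coeff p 0 = 0}"

text \<open>Graded (homogeneous, deg t = 1) ideals of R.\<close>
definition graded_ideal :: "nat set \<Rightarrow> 'k::field poly set \<Rightarrow> bool" where
  "graded_ideal H I \<longleftrightarrow> I \<subseteq> sgring H \<and> 0 \<in> I
     \<and> (\<forall>p\<in>I. \<forall>q\<in>I. p + q \<in> I)
     \<and> (\<forall>r\<in>sgring H. \<forall>p\<in>I. r * p \<in> I)
     \<and> (\<forall>p\<in>I. \<forall>n. monom (coeff p n) n \<in> I)"

definition ideal_span :: "nat set \<Rightarrow> 'k::field poly set \<Rightarrow> 'k poly set" where
  "ideal_span H G = {(\<Sum>g\<in>G. r g * g) | r. \<forall>g\<in>G. r g \<in> sgring H}"

definition mu :: "nat set \<Rightarrow> 'k::field poly set \<Rightarrow> nat" where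
  "mu H I = (LEAST n. \<exists>G. finite G \<and> card G = n \<and> G \<subseteq> I \<and> ideal_span H G = I)"

text \<open>Socle of R/I (preimage in R): elements annihilated by the maximal ideal modulo I.\<close>
definition socle_elem :: "nat set \<Rightarrow> 'k::field poly set \<Rightarrow> 'k poly \<Rightarrow> bool" where
  "socle_elem H I s \<longleftrightarrow> s \<in> sgring H \<and> (\<forall>q\<in>max_ideal H. s * q \<in> I)"

text \<open>Artinian graded local ring R/I is Gorenstein iff its socle is a one-dimensional
  k-vector space.\<close>
definition artinian_gorenstein :: "nat set \<Rightarrow> 'k::field poly set \<Rightarrow> bool" where
  "artinian_gorenstein H I \<longleftrightarrow>
     (\<exists>s. socle_elem H I s \<and> s \<notin> I \<and>
        (\<forall>q. socle_elem H I q \<longrightarrow> (\<exists>c. q - smult c s \<in> I)))"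

text \<open>For I \<noteq> 0, R/I is Artinian graded local. For I = 0 (R itself, a one-dimensional
  Cohen-Macaulay graded domain) Gorenstein means: type 1, i.e. R/xR is Artinian
  Gorenstein for a nonzero homogeneous x in the maximal ideal.\<close>
definition gorenstein_quot :: "nat set \<Rightarrow> 'k::field poly set \<Rightarrow> bool" where
  "gorenstein_quot H I \<longleftrightarrow>
     (if I = {0}
      then (\<exists>c n. c \<noteq> 0 \<and> n \<in> H \<and> n > 0 \<and>
              artinian_gorenstein H {monom (c::'k) n * r | r. r \<in> sgring H})
      else artinian_gorenstein H I)"

definition gor_ideals :: "nat set \<Rightarrow> 'k::field poly set set" where
  "gor_ideals H = {I. graded_ideal H I \<and> gorenstein_quot H I \<and> mu H I \<ge> 2}"

end

theory Submission
  imports Defs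
begin


definition IE :: "nat set \<Rightarrow> 'k::field poly set" where
  "IE E = {p. \<forall>n. coeff p n \<noteq> 0 \<longrightarrow> n \<in> E}"

lemma sgring_IE: "sgring H = IE H"
  unfolding sgring_def IE_def by simp

lemma IE_add: "p \<in> IE E \<Longrightarrow> q \<in> IE E \<Longrightarrow> p + q \<in> IE E"
proof -
  assume p: "p \<in> IE E" and q: "q \<in> IE E"
  { fix n assume "coeff (p + q) n \<noteq> 0"
    then have "coeff p n \<noteq> 0 \<or> coeff q n \<noteq> 0" by auto
    then have "n \<in> E" using p q unfolding IE_def by blast }
  then show ?thesis unfolding IE_def by blast
qed

lemma IE_zero: "0 \<in> IE E"
  unfolding IE_def by auto

lemma IE_monom: "n \<in> E \<Longrightarrow> monom c n \<in> IE E"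
  unfolding IE_def by auto

lemma sum_closed:
  assumes "finite A" "0 \<in> J" "\<And>p q. p \<in> J \<Longrightarrow> q \<in> J \<Longrightarrow> p + q \<in> J"
    "\<And>i. i \<in> A \<Longrightarrow> f i \<in> J"
  shows "sum f A \<in> J"
  using assms(1,4)
proof (induction A rule: finite_induct)
  case empty then show ?case using assms(2) by simp
next
  case (insert x F) then show ?case using assms(3) by simp
qed

lemma IE_sub:
  assumes "0 \<in> J" "\<And>p q. p \<in> J \<Longrightarrow> q \<in> J \<Longrightarrow> p + q \<in> J"
    "\<And>c n. n \<in> E \<Longrightarrow> monom c n \<in> J"
  shows "IE E \<subseteq> (J :: 'k::field poly set)"
proof
  fix p :: "'k poly" assume p: "p \<in> IE E"
  have "(\<Sum>i\<le>degree p. monom (coeff p i) i) \<in> J"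
  proof (rule sum_closed[OF _ assms(1,2)])
    fix i assume "i \<in> {..degree p}"
    show "monom (coeff p i) i \<in> J"
    proof (cases "coeff p i = 0")
      case True then show ?thesis using assms(1) by simp
    next
      case False then show ?thesis using p assms(3) unfolding IE_def by auto
    qed
  qed simp
  then show "p \<in> J" by (simp add: poly_as_sum_of_monoms)
qed

lemma mult_IE:
  assumes E: "\<And>e h. e \<in> E \<Longrightarrow> h \<in> H \<Longrightarrow> e + h \<in> E"
    and r: "r \<in> IE H" and p: "p \<in> IE E"
  shows "r * p \<in> IE E"
  unfolding IE_def mem_Collect_eq
proof (intro allI impI)
  fix n assume "coeff (r * p) n \<noteq> 0"
  then have "(\<Sum>i\<le>n. coeff r i * coeff p (n-i)) \<noteq> 0" by (simp add: coeff_mult)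
  then obtain i where i0: "i \<in> {..n}" and i: "coeff r i * coeff p (n-i) \<noteq> 0"
    by (rule sum.not_neutral_contains_not_neutral)
  then have "i \<in> H" "n - i \<in> E" using r p unfolding IE_def by auto
  then have "(n - i) + i \<in> E" using E by blast
  then show "n \<in> E" using i0 by simp
qed

lemma const_sg: "0 \<in> H \<Longrightarrow> [:c:] \<in> IE H"
  unfolding IE_def by (auto simp: coeff_pCons split: nat.splits)

lemma mult_const_monom: "[:c:] * monom a n = monom (c * a) n"
  by (simp add: smult_monom)

lemma gradedD:
  assumes "graded_ideal H I"
  shows "I \<subseteq> sgring H" "0 \<in> I" "\<And>p q. p \<in> I \<Longrightarrow> q \<in> I \<Longrightarrow> p + q \<in> I"
    "\<And>r p. r \<in> sgring H \<Longrightarrow> p \<in> I \<Longrightarrow> r * p \<in> I"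
    "\<And>p n. p \<in> I \<Longrightarrow> monom (coeff p n) n \<in> I"
  using assms unfolding graded_ideal_def by auto

definition Eset :: "'k::field poly set \<Rightarrow> nat set" where
  "Eset I = {n. monom 1 n \<in> I}"

lemma graded_eq:
  assumes g: "graded_ideal H I" and H0: "0 \<in> H"
  shows "I = IE (Eset I)"
proof
  show "I \<subseteq> IE (Eset I)"
  proof
    fix p assume p: "p \<in> I"
    show "p \<in> IE (Eset I)" unfolding IE_def Eset_def mem_Collect_eq
    proof (intro allI impI)
      fix n assume c: "coeff p n \<noteq> 0"
      have "monom (coeff p n) n \<in> I" using gradedD(5)[OF g p] .
      then have "[:inverse (coeff p n):] * monom (coeff p n) n \<in> I"
        using gradedD(4)[OF g] const_sg[OF H0] unfolding sgring_IE by blast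
      then show "monom 1 n \<in> I" using c by (simp add: smult_monom)
    qed
  qed
next
  show "IE (Eset I) \<subseteq> I"
  proof (rule IE_sub)
    show "0 \<in> I" using gradedD(2)[OF g] .
    show "\<And>p q. p \<in> I \<Longrightarrow> q \<in> I \<Longrightarrow> p + q \<in> I" using gradedD(3)[OF g] .
    fix c n assume "n \<in> Eset I"
    then have "[:c:] * monom 1 n \<in> I"
      using gradedD(4)[OF g] const_sg[OF H0] unfolding sgring_IE Eset_def by blast
    then show "monom c n \<in> I" by (simp add: smult_monom)
  qed
qed

lemma Eset_IE: "Eset (IE E :: 'k::field poly set) = E"
  unfolding Eset_def IE_def by (auto split: if_splits)

lemma Eset_ideal:
  fixes I :: "'k::field poly set"
  assumes g: "graded_ideal H I" and H0: "0 \<in> H"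
  shows "Eset I \<subseteq> H" "\<And>e h. e \<in> Eset I \<Longrightarrow> h \<in> H \<Longrightarrow> e + h \<in> Eset I"
proof -
  show "Eset I \<subseteq> H"
  proof
    fix n assume "n \<in> Eset I"
    then have "monom (1::'k) n \<in> sgring H" using gradedD(1)[OF g] unfolding Eset_def by blast
    then have "coeff (monom (1::'k) n) n \<noteq> 0 \<longrightarrow> n \<in> H" unfolding sgring_def by blast
    then show "n \<in> H" by simp
  qed
  fix e h assume "e \<in> Eset I" "h \<in> H"
  then have "monom 1 h * monom 1 e \<in> I"
    using gradedD(4)[OF g] IE_monom[of h H] unfolding sgring_IE Eset_def by blast
  then show "e + h \<in> Eset I" unfolding Eset_def by (simp add: mult_monom add.commute)
qed

lemma graded_IE:
  assumes H0: "0 \<in> H" and EH: "E \<subseteq> H" and E: "\<And>e h. e \<in> E \<Longrightarrow> h \<in> H \<Longrightarrow> e + h \<in> E"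
  shows "graded_ideal H (IE E :: 'k::field poly set)"
  unfolding graded_ideal_def
proof (intro conjI ballI allI)
  show "IE E \<subseteq> sgring H" using EH unfolding IE_def sgring_def by auto
  show "0 \<in> IE E" by (rule IE_zero)
  fix p assume p: "p \<in> (IE E :: 'k poly set)"
  { fix q assume "q \<in> (IE E :: 'k poly set)" then show "p + q \<in> IE E" using p IE_add by blast }
  { fix r :: "'k poly" assume "r \<in> sgring H" then show "r * p \<in> IE E" using mult_IE[OF E] p sgring_IE by blast }
  { fix n show "monom (coeff p n) n \<in> IE E" using p unfolding IE_def by auto }
qed



definition Soc :: "nat set \<Rightarrow> nat set \<Rightarrow> nat set" where
  "Soc H E = {s \<in> H. s \<notin> E \<and> (\<forall>m\<in>H. m > 0 \<longrightarrow> s + m \<in> E)}"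

lemma coeff_mult_nz:
  assumes "coeff (r * p) n \<noteq> 0"
  obtains i where "i \<le> n" "coeff r i \<noteq> 0" "coeff p (n - i) \<noteq> 0"
proof -
  have "(\<Sum>i\<le>n. coeff r i * coeff p (n-i)) \<noteq> 0" using assms by (simp add: coeff_mult)
  then obtain i where i0: "i \<in> {..n}" and i: "coeff r i * coeff p (n-i) \<noteq> 0"
    by (rule sum.not_neutral_contains_not_neutral)
  then show ?thesis using that i0 by (metis atMost_iff mult_not_zero)
qed

lemma socle_IE:
  fixes q :: "'k::field poly"
  assumes H0: "0 \<in> H" and EH: "E \<subseteq> H" and E: "\<And>e h. e \<in> E \<Longrightarrow> h \<in> H \<Longrightarrow> e + h \<in> E"
  shows "socle_elem H (IE E) q \<longleftrightarrow> q \<in> IE (E \<union> Soc H E)"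
proof
  assume s: "socle_elem H (IE E) q"
  then have qs: "q \<in> IE H" and qm: "\<And>x. x \<in> max_ideal H \<Longrightarrow> q * x \<in> IE E"
    unfolding socle_elem_def sgring_IE by auto
  show "q \<in> IE (E \<union> Soc H E)" unfolding IE_def mem_Collect_eq
  proof (intro allI impI)
    fix n assume cn: "coeff q n \<noteq> 0"
    then have nH: "n \<in> H" using qs unfolding IE_def by blast
    show "n \<in> E \<union> Soc H E"
    proof (cases "n \<in> E")
      case False
      have "\<forall>m\<in>H. m > 0 \<longrightarrow> n + m \<in> E"
      proof (intro ballI impI)
        fix m assume mH: "m \<in> H" and m0: "m > 0"
        have "monom (1::'k) m \<in> max_ideal H"
          unfolding max_ideal_def sgring_IE using IE_monom[OF mH] m0 by auto
        then have "q * monom 1 m \<in> IE E" by (rule qm)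
        moreover have "coeff (q * monom 1 m) (n + m) = coeff q n"
          by (simp add: mult.commute[of q] coeff_monom_mult)
        ultimately show "n + m \<in> E" using cn unfolding IE_def by auto
      qed
      then show ?thesis using False nH unfolding Soc_def by blast
    qed simp
  qed
next
  assume q: "q \<in> IE (E \<union> Soc H E)"
  have SH: "Soc H E \<subseteq> H" unfolding Soc_def by blast
  have "q \<in> sgring H" using q EH SH unfolding IE_def sgring_def by blast
  moreover have "\<forall>x\<in>max_ideal H. q * x \<in> IE E"
  proof
    fix x :: "'k poly" assume x: "x \<in> max_ideal H"
    then have xH: "x \<in> IE H" and x0: "coeff x 0 = 0" unfolding max_ideal_def sgring_IE by auto
    show "q * x \<in> IE E" unfolding IE_def mem_Collect_eq
    proof (intro allI impI)
      fix n assume "coeff (q * x) n \<noteq> 0"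
      then obtain i where i: "i \<le> n" "coeff q i \<noteq> 0" "coeff x (n - i) \<noteq> 0"
        by (rule coeff_mult_nz)
      have ni: "n - i \<in> H" using i(3) xH unfolding IE_def by blast
      have "n - i \<noteq> 0" using i(3) x0 by (metis)
      then have ni2: "n - i > 0" by simp
      note ni = ni ni2
      have "i \<in> E \<or> i \<in> Soc H E" using i(2) q unfolding IE_def by blast
      then have "i + (n - i) \<in> E"
      proof
        assume "i \<in> E" then show ?thesis using E ni by blast
      next
        assume "i \<in> Soc H E" then show ?thesis using ni unfolding Soc_def by blast
      qed
      then show "n \<in> E" using i(1) by simp
    qed
  qed
  ultimately show "socle_elem H (IE E) q" unfolding socle_elem_def by blast
qed

lemma AG_IE:
  assumes H0: "0 \<in> H" and EH: "E \<subseteq> H" and E: "\<And>e h. e \<in> E \<Longrightarrow> h \<in> H \<Longrightarrow> e + h \<in> E"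
  shows "artinian_gorenstein H (IE E :: 'k::field poly set) \<longleftrightarrow> (\<exists>s. Soc H E = {s})"
proof
  assume "artinian_gorenstein H (IE E :: 'k::field poly set)"
  then obtain s :: "'k poly" where s: "socle_elem H (IE E) s" "s \<notin> IE E"
    and u: "\<And>q. socle_elem H (IE E) q \<Longrightarrow> \<exists>c. q - smult c s \<in> IE E"
    unfolding artinian_gorenstein_def by blast
  have sS: "s \<in> IE (E \<union> Soc H E)" using s(1) socle_IE[OF H0 EH E] by blast
  obtain e0 where e0: "coeff s e0 \<noteq> 0" "e0 \<notin> E" using s(2) unfolding IE_def by blast
  then have e0S: "e0 \<in> Soc H E" using sS unfolding IE_def by blast
  have "Soc H E = {e0}"
  proof (rule ccontr)
    assume "Soc H E \<noteq> {e0}"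
    then obtain e1 where e1: "e1 \<in> Soc H E" "e1 \<noteq> e0" using e0S by blast
    have "monom (1::'k) e1 \<in> IE (E \<union> Soc H E)" using e1 IE_monom by blast
    then have "socle_elem H (IE E) (monom (1::'k) e1)" using socle_IE[OF H0 EH E] by blast
    then obtain c where c: "monom 1 e1 - smult c s \<in> IE E" using u by blast
    have e1E: "e1 \<notin> E" using e1 unfolding Soc_def by blast
    have "coeff (monom 1 e1 - smult c s) e0 = 0" using c e0(2) unfolding IE_def by blast
    then have "c = 0" using e0(1) e1(2) by simp
    moreover have "coeff (monom 1 e1 - smult c s) e1 = 0" using c e1E unfolding IE_def by blast
    ultimately show False by simp
  qed
  then show "\<exists>s. Soc H E = {s}" by blast
next
  assume "\<exists>s. Soc H E = {s}"
  then obtain s0 where s0: "Soc H E = {s0}" by blast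
  have s0E: "s0 \<notin> E" using s0 unfolding Soc_def by blast
  let ?s = "monom (1::'k) s0"
  have "?s \<in> IE (E \<union> Soc H E)" using s0 IE_monom by blast
  then have "socle_elem H (IE E) ?s" using socle_IE[OF H0 EH E] by blast
  moreover have "?s \<notin> IE E" using s0E unfolding IE_def by auto
  moreover have "\<forall>q. socle_elem H (IE E) q \<longrightarrow> (\<exists>c. q - smult c ?s \<in> IE E)"
  proof (intro allI impI)
    fix q :: "'k poly" assume "socle_elem H (IE E) q"
    then have q: "q \<in> IE (E \<union> Soc H E)" using socle_IE[OF H0 EH E] by blast
    have "q - smult (coeff q s0) ?s \<in> IE E" unfolding IE_def mem_Collect_eq
    proof (intro allI impI)
      fix n assume n: "coeff (q - smult (coeff q s0) ?s) n \<noteq> 0"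
      then have "n \<noteq> s0" by auto
      moreover have "coeff q n \<noteq> 0" using n \<open>n \<noteq> s0\<close> by auto
      ultimately show "n \<in> E" using q s0 unfolding IE_def by blast
    qed
    then show "\<exists>c. q - smult c ?s \<in> IE E" by blast
  qed
  ultimately show "artinian_gorenstein H (IE E :: 'k::field poly set)"
    unfolding artinian_gorenstein_def by blast
qed



definition low :: "'k::field poly \<Rightarrow> nat" where
  "low p = (LEAST n. coeff p n \<noteq> 0)"

lemma low_nz: "p \<noteq> 0 \<Longrightarrow> coeff p (low p) \<noteq> 0"
  unfolding low_def by (rule LeastI_ex) (metis coeff_0 poly_eqI)

lemma low_le: "coeff p n \<noteq> 0 \<Longrightarrow> low p \<le> n"
  unfolding low_def by (rule Least_le)

lemma coeff_mult_low:
  fixes p q :: "'k::field poly"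
  assumes "p \<noteq> 0" "q \<noteq> 0"
  shows "coeff (p * q) (low p + low q) \<noteq> 0"
proof -
  let ?N = "low p + low q"
  let ?f = "\<lambda>i. coeff p i * coeff q (?N - i)"
  have "coeff (p * q) ?N = sum ?f {..?N}" by (simp add: coeff_mult)
  also have "\<dots> = ?f (low p) + sum ?f ({..?N} - {low p})"
    by (rule sum.remove) auto
  also have "sum ?f ({..?N} - {low p}) = 0"
  proof (rule sum.neutral, intro ballI)
    fix i assume i: "i \<in> {..?N} - {low p}"
    show "?f i = 0"
    proof (cases "i < low p")
      case True
      then have "coeff p i = 0" using low_le[of p i] by (cases "coeff p i = 0") auto
      then show ?thesis by simp
    next
      case False
      then have "?N - i < low q" using i by auto
      then have "coeff q (?N - i) = 0" using low_le[of q "?N - i"] by (cases "coeff q (?N - i) = 0") auto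
      then show ?thesis by simp
    qed
  qed
  finally show ?thesis using low_nz[OF assms(1)] low_nz[OF assms(2)] by simp
qed

lemma span_singleton: "ideal_span H {p} = {r * p | r. r \<in> sgring H}"
  unfolding ideal_span_def
proof (rule set_eqI, rule iffI)
  fix x assume "x \<in> {\<Sum>g\<in>{p}. r g * g |r. \<forall>g\<in>{p}. r g \<in> sgring H}"
  then obtain r where "x = (\<Sum>g\<in>{p}. r g * g)" "\<forall>g\<in>{p}. r g \<in> sgring H" by blast
  then show "x \<in> {r * p |r. r \<in> sgring H}" by auto
next
  fix x assume "x \<in> {r * p |r. r \<in> sgring H}"
  then obtain r0 where r0: "x = r0 * p" "r0 \<in> sgring H" by blast
  show "x \<in> {\<Sum>g\<in>{p}. r g * g |r. \<forall>g\<in>{p}. r g \<in> sgring H}"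
    by (intro CollectI exI[of _ "\<lambda>_. r0"]) (use r0 in simp)
qed

lemma one_sg: assumes "0 \<in> H" shows "(1::'k::field poly) \<in> IE H"
proof -
  have "[:(1::'k):] \<in> IE H" by (rule const_sg[OF assms])
  then show ?thesis by (simp only: pCons_one)
qed

lemma principal_E:
  fixes p :: "'k::field poly"
  assumes H0: "0 \<in> H" and E: "\<And>e h. e \<in> E \<Longrightarrow> h \<in> H \<Longrightarrow> e + h \<in> E"
    and e0: "e0 \<in> E" and sp: "IE E = ideal_span H {p}"
  shows "\<exists>g\<in>E. E = (+) g ` H"
proof -
  have sp': "IE E = {r * p | r. r \<in> IE H}" using sp by (simp only: span_singleton sgring_IE)
  have "1 * p \<in> IE E" unfolding sp' using one_sg[OF H0] by blast
  then have pE: "p \<in> IE E" by simp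
  have "monom (1::'k) e0 \<in> IE E" using IE_monom[OF e0] .
  then obtain r0 where "monom 1 e0 = r0 * p" using sp' by blast
  then have p0: "p \<noteq> 0" by (metis monom_eq_0_iff mult_zero_right one_neq_zero)
  define g where "g = low p"
  have gE: "g \<in> E" using pE low_nz[OF p0] unfolding g_def IE_def by blast
  have "E \<subseteq> (+) g ` H"
  proof
    fix e assume eE: "e \<in> E"
    have "monom (1::'k) e \<in> IE E" using IE_monom[OF eE] .
    then obtain r where r: "monom 1 e = r * p" "r \<in> IE H" using sp' by blast
    then have r0: "r \<noteq> 0" by (metis monom_eq_0_iff mult_zero_left one_neq_zero)
    have "coeff (r * p) (low r + g) \<noteq> 0" using coeff_mult_low[OF r0 p0] unfolding g_def .
    then have "coeff (monom (1::'k) e) (low r + g) \<noteq> 0" using r(1) by simp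
    then have "e = low r + g" by (simp split: if_splits)
    moreover have "low r \<in> H" using r(2) low_nz[OF r0] unfolding IE_def by blast
    ultimately show "e \<in> (+) g ` H" by (simp add: add.commute)
  qed
  moreover have "(+) g ` H \<subseteq> E" using gE E by blast
  ultimately show ?thesis using gE by blast
qed

lemma span_zero: "ideal_span H G = S \<Longrightarrow> (0::'k::field poly) \<in> S"
proof -
  assume S: "ideal_span H G = S"
  have "(0::'k poly) \<in> ideal_span H G" unfolding ideal_span_def
    by (intro CollectI exI[of _ "\<lambda>_. 0"]) (simp add: sgring_IE IE_zero)
  then show ?thesis using S by simp
qed

lemma span_add:
  assumes "p \<in> ideal_span H G" "q \<in> ideal_span H G"
  shows "p + q \<in> ideal_span H (G :: 'k::field poly set)"
proof -
  obtain r1 where r1: "p = (\<Sum>g\<in>G. r1 g * g)" "\<forall>g\<in>G. r1 g \<in> sgring H"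
    using assms(1) unfolding ideal_span_def by blast
  obtain r2 where r2: "q = (\<Sum>g\<in>G. r2 g * g)" "\<forall>g\<in>G. r2 g \<in> sgring H"
    using assms(2) unfolding ideal_span_def by blast
  have a: "p + q = (\<Sum>g\<in>G. (r1 g + r2 g) * g)"
    unfolding r1 r2 by (simp add: sum.distrib distrib_right)
  have b: "\<forall>g\<in>G. r1 g + r2 g \<in> sgring H"
    using r1(2) r2(2) IE_add sgring_IE by metis
  show ?thesis unfolding ideal_span_def
    by (intro CollectI exI[of _ "\<lambda>g. r1 g + r2 g"]) (use a b in simp)
qed

lemma span_gen:
  assumes "finite G" "g0 \<in> G" "r0 \<in> sgring H"
  shows "r0 * g0 \<in> ideal_span H (G :: 'k::field poly set)"
proof -
  let ?r = "\<lambda>g. if g = g0 then r0 else 0"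
  have "(\<Sum>g\<in>G. ?r g * g) = (\<Sum>g\<in>G. if g = g0 then r0 * g0 else 0)"
    by (rule sum.cong) auto
  also have "\<dots> = r0 * g0" using assms(1,2) by (simp add: sum.delta')
  finally have a: "r0 * g0 = (\<Sum>g\<in>G. ?r g * g)" by simp
  have b: "\<forall>g\<in>G. ?r g \<in> sgring H" using assms(3) IE_zero sgring_IE by auto
  show ?thesis unfolding ideal_span_def
    by (intro CollectI exI[of _ ?r]) (use a b in simp)
qed

lemma span_sub:
  assumes "finite G" "G \<subseteq> IE E" and E: "\<And>e h. e \<in> E \<Longrightarrow> h \<in> H \<Longrightarrow> e + h \<in> E"
  shows "ideal_span H G \<subseteq> (IE E :: 'k::field poly set)"
proof
  fix x assume "x \<in> ideal_span H G"
  then obtain r where r: "x = (\<Sum>g\<in>G. r g * g)" "\<forall>g\<in>G. r g \<in> sgring H"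
    unfolding ideal_span_def by blast
  have "(\<Sum>g\<in>G. r g * g) \<in> IE E"
    using assms(1)
  proof (rule sum_closed)
    show "0 \<in> IE E" by (rule IE_zero)
    show "\<And>p q. p \<in> IE E \<Longrightarrow> q \<in> IE E \<Longrightarrow> p + q \<in> IE E" by (rule IE_add)
    fix g assume "g \<in> G"
    then show "r g * g \<in> IE E" using mult_IE[OF E] r(2) assms(2) sgring_IE by blast
  qed
  then show "x \<in> IE E" using r(1) by simp
qed

lemma fingen:
  assumes H0: "0 \<in> H" and Hadd: "\<And>x y. x \<in> H \<Longrightarrow> y \<in> H \<Longrightarrow> x + y \<in> H"
    and E: "\<And>e h. e \<in> E \<Longrightarrow> h \<in> H \<Longrightarrow> e + h \<in> E"
    and m: "m \<in> H" "m > 0" and N: "\<And>n. n \<ge> N \<Longrightarrow> n \<in> E"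
  shows "\<exists>G. finite G \<and> G \<subseteq> IE E \<and> ideal_span H G = (IE E :: 'k::field poly set)"
proof -
  let ?B = "{e \<in> E. e \<le> N + m}"
  let ?G = "(\<lambda>e. monom (1::'k) e) ` ?B"
  have fin: "finite ?G" by simp
  have GE: "?G \<subseteq> IE E" using IE_monom by blast
  have dec: "\<And>n. n \<in> E \<Longrightarrow> \<exists>g\<in>?B. \<exists>h\<in>H. n = g + h"
  proof -
    fix n show "n \<in> E \<Longrightarrow> \<exists>g\<in>?B. \<exists>h\<in>H. n = g + h"
    proof (induction n rule: less_induct)
      case (less n)
      show ?case
      proof (cases "n \<le> N + m")
        case True then show ?thesis using less.prems H0 by force
      next
        case False
        then have "n - m \<in> E" using N by auto
        moreover have "n - m < n" using m False by auto
        ultimately obtain g h where gh: "g \<in> ?B" "h \<in> H" "n - m = g + h" using less.IH by blast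
        then have "n = g + (h + m)" using False by auto
        moreover have "h + m \<in> H" using Hadd gh(2) m(1) by blast
        ultimately show ?thesis using gh(1) by blast
      qed
    qed
  qed
  have "IE E \<subseteq> ideal_span H ?G"
  proof (rule IE_sub)
    show "0 \<in> ideal_span H ?G" using span_zero by blast
    show "\<And>p q. p \<in> ideal_span H ?G \<Longrightarrow> q \<in> ideal_span H ?G \<Longrightarrow> p + q \<in> ideal_span H ?G"
      by (rule span_add)
    fix c n assume "n \<in> E"
    then obtain g h where gh: "g \<in> ?B" "h \<in> H" "n = g + h" using dec by blast
    have "monom c h * monom 1 g \<in> ideal_span H ?G"
      by (rule span_gen[OF fin]) (use gh IE_monom[of h H c] in \<open>auto simp: sgring_IE\<close>)
    then show "monom c n \<in> ideal_span H ?G" using gh(3) by (simp add: mult_monom add.commute)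
  qed
  moreover have "ideal_span H ?G \<subseteq> IE E" by (rule span_sub[OF fin GE E])
  ultimately show ?thesis using fin GE by blast
qed

lemma mu_ge2:
  assumes H0: "0 \<in> H" and E: "\<And>e h. e \<in> E \<Longrightarrow> h \<in> H \<Longrightarrow> e + h \<in> E"
    and e0: "e0 \<in> E" and fg: "\<exists>G. finite G \<and> G \<subseteq> IE E \<and> ideal_span H G = (IE E :: 'k::field poly set)"
    and np: "\<not> (\<exists>g\<in>E. E = (+) g ` H)"
  shows "mu H (IE E :: 'k::field poly set) \<ge> 2"
proof -
  let ?P = "\<lambda>n. \<exists>G. finite G \<and> card G = n \<and> G \<subseteq> (IE E :: 'k poly set) \<and> ideal_span H G = IE E"
  have ex: "\<exists>n. ?P n" using fg by blast
  have n0: "\<not> ?P 0"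
  proof
    assume "?P 0"
    then obtain G where G: "finite G" "card G = 0" "ideal_span H G = (IE E :: 'k poly set)" by blast
    then have "G = {}" by simp
    then have "ideal_span H G = {0 :: 'k poly}" unfolding ideal_span_def by simp
    moreover have "monom (1::'k) e0 \<in> IE E" using IE_monom[OF e0] .
    ultimately show False using G(3) by simp
  qed
  have n1: "\<not> ?P 1"
  proof
    assume "?P 1"
    then obtain G where G: "card G = 1" "ideal_span H G = (IE E :: 'k poly set)" by blast
    then obtain p where "G = {p}" using card_1_singletonE by blast
    then show False using principal_E[OF H0 E e0] G(2) np by metis
  qed
  have "?P (mu H (IE E :: 'k poly set))" unfolding mu_def by (rule LeastI_ex[OF ex])
  then have "mu H (IE E :: 'k poly set) \<noteq> 0" "mu H (IE E :: 'k poly set) \<noteq> 1" using n0 n1 by metis+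
  then show ?thesis by linarith
qed

lemma mu_le1:
  assumes H0: "0 \<in> H" and Hadd: "\<And>x y. x \<in> H \<Longrightarrow> y \<in> H \<Longrightarrow> x + y \<in> H"
    and gH: "g \<in> H"
  shows "mu H (IE ((+) g ` H) :: 'k::field poly set) \<le> 1"
proof -
  let ?E = "(+) g ` H"
  have E: "\<And>e h. e \<in> ?E \<Longrightarrow> h \<in> H \<Longrightarrow> e + h \<in> ?E"
    using Hadd by (auto simp: add.assoc)
  let ?G = "{monom (1::'k) g}"
  have gE: "g \<in> ?E" using H0 by force
  have "ideal_span H ?G \<subseteq> IE ?E" by (rule span_sub) (use IE_monom[OF gE] E in auto)
  moreover have "IE ?E \<subseteq> ideal_span H ?G"
  proof (rule IE_sub)
    show "0 \<in> ideal_span H ?G" using span_zero by blast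
    show "\<And>p q. p \<in> ideal_span H ?G \<Longrightarrow> q \<in> ideal_span H ?G \<Longrightarrow> p + q \<in> ideal_span H ?G"
      by (rule span_add)
    fix c n assume "n \<in> ?E"
    then obtain h where h: "h \<in> H" "n = g + h" by blast
    have "monom c h * monom 1 g \<in> ideal_span H ?G"
      by (rule span_gen) (use h IE_monom[of h H c] in \<open>auto simp: sgring_IE\<close>)
    then show "monom c n \<in> ideal_span H ?G" using h(2) by (simp add: mult_monom add.commute)
  qed
  ultimately have "\<exists>G. finite G \<and> card G = 1 \<and> G \<subseteq> (IE ?E :: 'k poly set) \<and> ideal_span H G = IE ?E"
    using IE_monom[OF gE] by (intro exI[of _ ?G]) auto
  then show ?thesis unfolding mu_def by (rule Least_le)
qed

lemma mu_zero: "mu H ({0} :: 'k::field poly set) = 0"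
proof -
  have "\<exists>G. finite G \<and> card G = 0 \<and> G \<subseteq> ({0} :: 'k poly set) \<and> ideal_span H G = {0}"
    by (intro exI[of _ "{}"]) (simp add: ideal_span_def)
  then have "mu H ({0} :: 'k poly set) \<le> 0" unfolding mu_def by (rule Least_le)
  then show ?thesis by simp
qed



definition inH :: "nat set \<Rightarrow> int \<Rightarrow> bool" where
  "inH H z \<longleftrightarrow> z \<ge> 0 \<and> nat z \<in> H"

locale symsg =
  fixes H :: "nat set" and F :: nat
  assumes H0: "0 \<in> H" and Hadd: "\<And>x y. x \<in> H \<Longrightarrow> y \<in> H \<Longrightarrow> x + y \<in> H"
    and sym: "\<And>z. inH H z \<longleftrightarrow> \<not> inH H (int F - z)"
begin

lemma inH_nat: "inH H (int n) \<longleftrightarrow> n \<in> H"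
  unfolding inH_def by simp

lemma inH_neg: "z < 0 \<Longrightarrow> \<not> inH H z"
  unfolding inH_def by simp

lemma F_notin: "F \<notin> H"
  using sym[of "int F"] H0 by (simp add: inH_def)

lemma big: "n > F \<Longrightarrow> n \<in> H"
  using sym[of "int n"] inH_neg[of "int F - int n"] by (simp add: inH_nat)

lemma inH_add: "inH H x \<Longrightarrow> inH H y \<Longrightarrow> inH H (x + y)"
  unfolding inH_def using Hadd by (simp add: nat_add_distrib)

lemma inH_diff: "inH H (int a - int b) \<longleftrightarrow> b \<le> a \<and> a - b \<in> H"
proof -
  have "nat (int a - int b) = a - b" by simp
  then show ?thesis unfolding inH_def by auto
qed

definition Es :: "nat \<Rightarrow> nat set" where
  "Es s = {h \<in> H. \<not> inH H (int s - int h)}"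

lemma Es_sub: "Es s \<subseteq> H"
  unfolding Es_def by blast

lemma Es_ideal: "e \<in> Es s \<Longrightarrow> h \<in> H \<Longrightarrow> e + h \<in> Es s"
proof -
  assume e: "e \<in> Es s" and h: "h \<in> H"
  have "e + h \<in> H" using e h Hadd unfolding Es_def by blast
  moreover have "\<not> inH H (int s - int (e + h))"
  proof
    assume "inH H (int s - int (e + h))"
    then have "inH H (int s - int (e + h) + int h)" using inH_add h inH_nat by blast
    then show False using e unfolding Es_def by simp
  qed
  ultimately show ?thesis unfolding Es_def by blast
qed

lemma Es_big: "n \<ge> s + F + 1 \<Longrightarrow> n \<in> Es s"
  unfolding Es_def using big inH_neg by auto

lemma Soc_Es: assumes s: "s \<in> H" shows "Soc H (Es s) = {s}"
proof
  show "{s} \<subseteq> Soc H (Es s)"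
  proof -
    have "s \<notin> Es s" unfolding Es_def using H0 by (simp add: inH_def)
    moreover have "\<forall>m\<in>H. m > 0 \<longrightarrow> s + m \<in> Es s"
      unfolding Es_def using Hadd s inH_neg by auto
    ultimately show ?thesis using s unfolding Soc_def by blast
  qed
next
  show "Soc H (Es s) \<subseteq> {s}"
  proof
    fix t assume t: "t \<in> Soc H (Es s)"
    then have tH: "t \<in> H" and tE: "t \<notin> Es s" and tm: "\<forall>m\<in>H. m > 0 \<longrightarrow> t + m \<in> Es s"
      unfolding Soc_def by auto
    then have st: "inH H (int s - int t)" unfolding Es_def by blast
    show "t \<in> {s}"
    proof (rule ccontr)
      assume "t \<notin> {s}"
      then have ts: "t \<noteq> s" by simp
      have "int s - int t \<ge> 0" using st unfolding inH_def by simp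
      then have "t < s" using ts by simp
      have m: "s - t \<in> H" using st inH_diff by blast
      have "s - t > 0" using \<open>t < s\<close> by simp
      then have "t + (s - t) \<in> Es s" using tm m by blast
      then have "s \<in> Es s" using \<open>t < s\<close> by simp
      then show False unfolding Es_def using H0 by (simp add: inH_def)
    qed
  qed
qed

lemma classify:
  assumes EH: "E \<subseteq> H" and E: "\<And>e h. e \<in> E \<Longrightarrow> h \<in> H \<Longrightarrow> e + h \<in> E"
    and e0: "e0 \<in> E" and S: "Soc H E = {s}"
  shows "E = Es s"
proof
  have sS: "s \<in> Soc H E" using S by blast
  then have sE: "s \<notin> E" and sH: "s \<in> H" unfolding Soc_def by auto
  show "E \<subseteq> Es s"
  proof
    fix h assume hE: "h \<in> E"
    have "\<not> inH H (int s - int h)"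
    proof
      assume a: "inH H (int s - int h)"
      then have "h \<le> s" "s - h \<in> H" using inH_diff by blast+
      then have "h + (s - h) \<in> E" using E hE by blast
      then show False using sE \<open>h \<le> s\<close> by simp
    qed
    then show "h \<in> Es s" using hE EH unfolding Es_def by blast
  qed
next
  show "Es s \<subseteq> E"
  proof
    fix h assume hEs: "h \<in> Es s"
    then have hH: "h \<in> H" and nh: "\<not> inH H (int s - int h)" unfolding Es_def by auto
    show "h \<in> E"
    proof (rule ccontr)
      assume hE: "h \<notin> E"
      let ?A = "{h' \<in> H. h' \<notin> E \<and> inH H (int h' - int h)}"
      have bnd: "?A \<subseteq> {..e0 + F}"
      proof
        fix n assume n: "n \<in> ?A"
        show "n \<in> {..e0 + F}"
        proof (rule ccontr)
          assume "n \<notin> {..e0 + F}"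
          then have "n - e0 > F" "e0 \<le> n" by auto
          then have "n - e0 \<in> H" using big by blast
          then have "e0 + (n - e0) \<in> E" using E e0 by blast
          then show False using n \<open>e0 \<le> n\<close> by simp
        qed
      qed
      have fin: "finite ?A" using bnd finite_subset by blast
      have hA: "h \<in> ?A" using hH hE H0 by (simp add: inH_def)
      define t where "t = Max ?A"
      have tA: "t \<in> ?A" unfolding t_def using fin hA Max_in by blast
      have tmax: "\<And>n. n \<in> ?A \<Longrightarrow> n \<le> t" unfolding t_def using fin by simp
      have "t \<in> Soc H E"
        unfolding Soc_def
      proof (intro CollectI conjI ballI impI)
        show "t \<in> H" "t \<notin> E" using tA by auto
        fix m assume m: "m \<in> H" "m > 0"
        show "t + m \<in> E"
        proof (rule ccontr)
          assume "t + m \<notin> E"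
          moreover have "t + m \<in> H" using Hadd tA m by blast
          moreover have "inH H (int (t + m) - int h)"
            using inH_add[of "int t - int h" "int m"] tA m(1) inH_nat by (simp add: algebra_simps)
          ultimately have "t + m \<in> ?A" by blast
          then show False using tmax m(2) by fastforce
        qed
      qed
      then have "t = s" using S by blast
      then show False using tA nh by blast
    qed
  qed
qed

lemma principal_Es:
  assumes g: "g \<in> H" shows "(+) g ` H = Es (g + F)"
proof
  show "(+) g ` H \<subseteq> Es (g + F)"
  proof
    fix x assume "x \<in> (+) g ` H"
    then obtain h where h: "h \<in> H" "x = g + h" by blast
    have "\<not> inH H (int F - int h)" using sym[of "int h"] h(1) inH_nat by blast
    then show "x \<in> Es (g + F)" unfolding Es_def using h Hadd g by (simp add: algebra_simps)
  qed
next
  show "Es (g + F) \<subseteq> (+) g ` H"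
  proof
    fix x assume "x \<in> Es (g + F)"
    then have xH: "x \<in> H" and nx: "\<not> inH H (int (g + F) - int x)" unfolding Es_def by auto
    have "inH H (int x - int g)" using sym[of "int x - int g"] nx by (simp add: algebra_simps)
    then have "g \<le> x" "x - g \<in> H" using inH_diff by blast+
    then show "x \<in> (+) g ` H" by (metis image_eqI le_add_diff_inverse)
  qed
qed

end



context symsg
begin

definition Xs :: "nat set" where
  "Xs = {s \<in> H. \<not> inH H (int s - int F)}"

lemma IE_empty: "IE {} = ({0} :: 'k::field poly set)"
  unfolding IE_def by (auto intro: poly_eqI)

lemma Es_ne: "s + F + 1 \<in> Es s"
  by (rule Es_big) simp

lemma IE_Es_ne: "IE (Es s) \<noteq> ({0} :: 'k::field poly set)"
proof
  assume "IE (Es s) = ({0} :: 'k::field poly set)"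
  moreover have "monom (1::'k) (s + F + 1) \<in> IE (Es s)" by (rule IE_monom[OF Es_ne])
  ultimately show False by simp
qed

lemma gor_char: "gor_ideals H = (\<lambda>s. IE (Es s) :: 'k::field poly set) ` Xs"
proof
  show "gor_ideals H \<subseteq> (\<lambda>s. IE (Es s) :: 'k::field poly set) ` Xs"
  proof
    fix I :: "'k poly set" assume "I \<in> gor_ideals H"
    then have g: "graded_ideal H I" and gq: "gorenstein_quot H I" and m2: "mu H I \<ge> 2"
      unfolding gor_ideals_def by auto
    define E where "E = Eset I"
    have IE: "I = IE E" unfolding E_def by (rule graded_eq[OF g H0])
    have EH: "E \<subseteq> H" and E: "\<And>e h. e \<in> E \<Longrightarrow> h \<in> H \<Longrightarrow> e + h \<in> E"
      unfolding E_def using Eset_ideal[OF g H0] by auto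
    have I0: "I \<noteq> {0}" using m2 mu_zero[of H] by (metis not_numeral_le_zero)
    then have ag: "artinian_gorenstein H I" using gq unfolding gorenstein_quot_def by simp
    have "E \<noteq> {}" using I0 IE IE_empty by metis
    then obtain e0 where e0: "e0 \<in> E" by blast
    obtain s where S: "Soc H E = {s}" using ag AG_IE[OF H0 EH E] IE by metis
    have sH: "s \<in> H" using S unfolding Soc_def by blast
    have EE: "E = Es s" by (rule classify[OF EH E e0 S])
    have "\<not> inH H (int s - int F)"
    proof
      assume "inH H (int s - int F)"
      then have gH: "s - F \<in> H" and sF: "F \<le> s" using inH_diff by blast+
      have "Es s = (+) (s - F) ` H" using principal_Es[OF gH] sF by simp
      then have "mu H (IE (Es s) :: 'k poly set) \<le> 1" using mu_le1[OF H0 Hadd gH] by simp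
      then show False using m2 IE EE by simp
    qed
    then have "s \<in> Xs" using sH unfolding Xs_def by blast
    then show "I \<in> (\<lambda>s. IE (Es s) :: 'k::field poly set) ` Xs" using IE EE by blast
  qed
next
  show "(\<lambda>s. IE (Es s) :: 'k::field poly set) ` Xs \<subseteq> gor_ideals H"
  proof
    fix I :: "'k poly set" assume "I \<in> (\<lambda>s. IE (Es s) :: 'k::field poly set) ` Xs"
    then obtain s where s: "s \<in> Xs" and I: "I = IE (Es s)" by blast
    have sH: "s \<in> H" and ns: "\<not> inH H (int s - int F)" using s unfolding Xs_def by auto
    have EH: "Es s \<subseteq> H" and E: "\<And>e h. e \<in> Es s \<Longrightarrow> h \<in> H \<Longrightarrow> e + h \<in> Es s"
      using Es_sub Es_ideal by auto
    have g: "graded_ideal H I" unfolding I by (rule graded_IE[OF H0 EH E])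
    have I0: "I \<noteq> {0}" unfolding I by (rule IE_Es_ne)
    have "artinian_gorenstein H I" unfolding I using AG_IE[OF H0 EH E] Soc_Es[OF sH] by blast
    then have gq: "gorenstein_quot H I" using I0 unfolding gorenstein_quot_def by simp
    have FH: "F + 1 \<in> H" using big by simp
    have fg: "\<exists>G. finite G \<and> G \<subseteq> IE (Es s) \<and> ideal_span H G = (IE (Es s) :: 'k poly set)"
      by (rule fingen[OF H0 Hadd E FH, of "s + F + 1"]) (auto intro: Es_big)
    have np: "\<not> (\<exists>g\<in>Es s. Es s = (+) g ` H)"
    proof
      assume "\<exists>g\<in>Es s. Es s = (+) g ` H"
      then obtain g where gE: "g \<in> Es s" and eq: "Es s = (+) g ` H" by blast
      have gH: "g \<in> H" using gE EH by blast
      have "s \<notin> Es s" unfolding Es_def using H0 by (simp add: inH_def)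
      then have g0: "g \<noteq> 0" using eq sH by auto
      have "inH H (int g + int F)" using sym[of "int g + int F"] inH_neg[of "- int g"] g0 by simp
      then have gFH: "g + F \<in> H" using inH_nat[of "g + F"] by simp
      have "Soc H (Es s) = Soc H (Es (g + F))" using eq principal_Es[OF gH] by simp
      then have "s = g + F" using Soc_Es[OF sH] Soc_Es[OF gFH] by simp
      then show False using ns gH inH_nat by simp
    qed
    have "mu H I \<ge> 2" unfolding I by (rule mu_ge2[OF H0 E Es_ne fg np])
    then show "I \<in> gor_ideals H" using g gq unfolding gor_ideals_def by blast
  qed
qed

lemma inj_Es: "inj_on (\<lambda>s. IE (Es s) :: 'k::field poly set) Xs"
proof
  fix s t assume s: "s \<in> Xs" and t: "t \<in> Xs" and eq: "(IE (Es s) :: 'k poly set) = IE (Es t)"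
  have "Es s = Es t" using arg_cong[OF eq, of Eset] Eset_IE by metis
  then show "s = t" using Soc_Es s t unfolding Xs_def by (metis (no_types, lifting) mem_Collect_eq singleton_inject)
qed

lemma card_Xs: "finite Xs \<and> card Xs = F + 1"
proof -
  let ?phi = "\<lambda>x. if x \<in> H then x else x + F"
  have "bij_betw ?phi {0..F} Xs"
  proof (rule bij_betw_imageI)
    show "inj_on ?phi {0..F}"
    proof
      fix x y assume x: "x \<in> {0..F}" and y: "y \<in> {0..F}" and e: "?phi x = ?phi y"
      have nF: "\<And>z. z \<in> H \<Longrightarrow> z \<le> F \<Longrightarrow> z < F" using F_notin by (metis le_neq_implies_less)
      have n0: "\<And>z. z \<notin> H \<Longrightarrow> z > 0" using H0 by (metis gr0I)
      show "x = y"
        using e x y nF n0 by (auto split: if_splits)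
    qed
    show "?phi ` {0..F} = Xs"
    proof
      show "?phi ` {0..F} \<subseteq> Xs"
      proof
        fix y assume "y \<in> ?phi ` {0..F}"
        then obtain x where x: "x \<le> F" "y = ?phi x" by auto
        show "y \<in> Xs"
        proof (cases "x \<in> H")
          case True
          then have "x \<noteq> F" using F_notin by blast
          then have "int x - int F < 0" using x by simp
          then show ?thesis using True x inH_neg unfolding Xs_def by auto
        next
          case False
          then have "x > 0" using H0 by (metis gr0I)
          then have "inH H (int x + int F)" using sym[of "int x + int F"] inH_neg[of "- int x"] by simp
          then have "x + F \<in> H" using inH_nat[of "x + F"] by simp
          moreover have "\<not> inH H (int (x + F) - int F)" using False inH_nat by simp
          ultimately show ?thesis using False x unfolding Xs_def by auto
        qed
      qed
    next
      show "Xs \<subseteq> ?phi ` {0..F}"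
      proof
        fix s assume s: "s \<in> Xs"
        then have sH: "s \<in> H" and ns: "\<not> inH H (int s - int F)" unfolding Xs_def by auto
        show "s \<in> ?phi ` {0..F}"
        proof (cases "s \<le> F")
          case True then show ?thesis using sH by (intro image_eqI[of _ _ s]) auto
        next
          case False
          then have nH: "s - F \<notin> H" using ns inH_diff by simp
          have "s - F \<le> F" using big nH by (metis not_le)
          then show ?thesis using nH False by (intro image_eqI[of _ _ "s - F"]) auto
        qed
      qed
    qed
  qed
  then have "finite Xs" "card {0..F} = card Xs"
    using bij_betw_finite bij_betw_same_card finite_atLeastAtMost by blast+
  then show ?thesis by simp
qed

lemma gor_zero: "gorenstein_quot H ({0} :: 'k::field poly set)"
proof -
  let ?n = "F + 1"
  have nH: "?n \<in> H" using big by simp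
  have eq: "{monom (1::'k) ?n * r | r. r \<in> sgring H} = IE ((+) ?n ` H)"
  proof
    show "{monom (1::'k) ?n * r | r. r \<in> sgring H} \<subseteq> IE ((+) ?n ` H)"
    proof
      fix x assume "x \<in> {monom (1::'k) ?n * r | r. r \<in> sgring H}"
      then obtain r where r: "x = monom 1 ?n * r" "r \<in> IE H" using sgring_IE by blast
      show "x \<in> IE ((+) ?n ` H)" unfolding IE_def mem_Collect_eq
      proof (intro allI impI)
        fix k assume "coeff x k \<noteq> 0"
        then have k: "\<not> k < ?n" "coeff r (k - ?n) \<noteq> 0" using r(1) by (auto simp: coeff_monom_mult split: if_splits)
        then have "k - ?n \<in> H" using r(2) unfolding IE_def by blast
        then show "k \<in> (+) ?n ` H" using k(1) by (metis image_eqI le_add_diff_inverse not_less)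
      qed
    qed
  next
    show "IE ((+) ?n ` H) \<subseteq> {monom (1::'k) ?n * r | r. r \<in> sgring H}"
    proof (rule IE_sub)
      show "0 \<in> {monom (1::'k) ?n * r | r. r \<in> sgring H}"
        using IE_zero sgring_IE by (metis (mono_tags, lifting) mem_Collect_eq mult_zero_right)
      fix p q assume "p \<in> {monom (1::'k) ?n * r | r. r \<in> sgring H}" "q \<in> {monom (1::'k) ?n * r | r. r \<in> sgring H}"
      then obtain r1 r2 where rr: "p = monom 1 ?n * r1" "r1 \<in> IE H" "q = monom 1 ?n * r2" "r2 \<in> IE H"
        using sgring_IE by blast
      then have "p + q = monom 1 ?n * (r1 + r2)" by (simp add: distrib_left)
      moreover have "r1 + r2 \<in> sgring H" unfolding sgring_IE using IE_add rr by blast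
      ultimately show "p + q \<in> {monom (1::'k) ?n * r | r. r \<in> sgring H}" by blast
    next
      fix c :: 'k and m assume "m \<in> (+) ?n ` H"
      then obtain h where h: "h \<in> H" "m = ?n + h" by blast
      have "monom c m = monom 1 ?n * monom c h" using h(2) by (simp add: mult_monom)
      moreover have "monom c h \<in> sgring H" using IE_monom[OF h(1)] sgring_IE by blast
      ultimately show "monom c m \<in> {monom (1::'k) ?n * r | r. r \<in> sgring H}" by blast
    qed
  qed
  have EH: "(+) ?n ` H \<subseteq> H" using Hadd nH by blast
  have E: "\<And>e h. e \<in> (+) ?n ` H \<Longrightarrow> h \<in> H \<Longrightarrow> e + h \<in> (+) ?n ` H"
    using Hadd by (auto simp: add.assoc)
  have "?n + F \<in> H" using big by simp
  then have "Soc H ((+) ?n ` H) = {?n + F}" using principal_Es[OF nH] Soc_Es by simp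
  then have "artinian_gorenstein H (IE ((+) ?n ` H) :: 'k poly set)" using AG_IE[OF H0 EH E] by blast
  then have "artinian_gorenstein H {monom (1::'k) ?n * r | r. r \<in> sgring H}" using eq by simp
  then have "\<exists>c n. c \<noteq> 0 \<and> n \<in> H \<and> 0 < n \<and> artinian_gorenstein H {monom (c::'k) n * r |r. r \<in> sgring H}"
    using nH by (intro exI[of _ "1::'k"] exI[of _ ?n]) auto
  then show ?thesis unfolding gorenstein_quot_def by simp
qed

theorem main_generic:
  "gorenstein_quot H ({0} :: 'k::field poly set)
   \<and> finite (gor_ideals H :: 'k poly set set)
   \<and> card (gor_ideals H :: 'k poly set set) = F + 1"
proof -
  have "card (gor_ideals H :: 'k poly set set) = card Xs"
    unfolding gor_char by (rule card_image[OF inj_Es])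
  moreover have "finite (gor_ideals H :: 'k poly set set)" unfolding gor_char using card_Xs by simp
  moreover have "gorenstein_quot H ({0} :: 'k::field poly set)" by (rule gor_zero)
  ultimately show ?thesis using card_Xs by simp
qed

end



definition inS1 :: "int \<Rightarrow> int \<Rightarrow> int \<Rightarrow> bool" where
  "inS1 a b w \<longleftrightarrow> (\<exists>i j::nat. w = int i * a + int j * b)"

lemma S1_not_both:
  fixes a b :: int
  assumes a: "a > 0" and b: "b > 0" and g: "gcd a b = 1"
    and w1: "inS1 a b w" and w2: "inS1 a b (a * b - a - b - w)"
  shows False
proof -
  obtain i j :: nat where ij: "w = int i * a + int j * b" using w1 unfolding inS1_def by blast
  obtain i' j' :: nat where ij': "a * b - a - b - w = int i' * a + int j' * b" using w2 unfolding inS1_def by blast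
  define x where "x = int i + int i' + 1"
  define y where "y = int j + int j' + 1"
  have eq: "a * b = x * a + y * b" using ij ij' unfolding x_def y_def by (simp add: algebra_simps)
  have "a dvd y * b" using eq by (metis dvd_add_right_iff dvd_triv_left dvd_triv_right)
  then have "a dvd y" using g by (metis coprime_dvd_mult_left_iff coprime_iff_gcd_eq_1)
  moreover have "y > 0" unfolding y_def by simp
  ultimately have ya: "y \<ge> a" using zdvd_imp_le by blast
  have "b dvd x * a" using eq by (metis dvd_add_right_iff dvd_triv_left dvd_triv_right add.commute)
  then have "b dvd x" using g by (metis coprime_dvd_mult_left_iff coprime_iff_gcd_eq_1 gcd.commute)
  moreover have "x > 0" unfolding x_def by simp
  ultimately have xb: "x \<ge> b" using zdvd_imp_le by blast
  have "x * a \<ge> b * a" using xb a by (simp add: mult_right_mono)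
  moreover have "y * b \<ge> a * b" using ya b by (simp add: mult_right_mono)
  moreover have "a * b > 0" using a b by simp
  ultimately show False using eq by (simp add: algebra_simps)
qed

lemma S1_one:
  fixes a b :: int
  assumes a: "a > 0" and b: "b > 0" and g: "gcd a b = 1"
  shows "inS1 a b w \<or> inS1 a b (a * b - a - b - w)"
proof -
  obtain u v where uv: "u * a + v * b = 1" using bezout_int[of a b] g by auto
  define j where "j = (w * v) mod a"
  define i where "i = w * u + ((w * v) div a) * b"
  have wij: "w = i * a + j * b"
  proof -
    have "i * a + j * b = w * u * a + b * (a * ((w * v) div a) + (w * v) mod a)"
      unfolding i_def j_def by (simp only: algebra_simps)
    also have "\<dots> = w * u * a + b * (w * v)"
      by (simp only: mult_div_mod_eq)
    also have "\<dots> = w * (u * a + v * b)" by (simp add: algebra_simps)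
    finally show ?thesis using uv by simp
  qed
  have j0: "0 \<le> j" "j < a" unfolding j_def using a by auto
  show ?thesis
  proof (cases "i \<ge> 0")
    case True
    have "w = int (nat i) * a + int (nat j) * b" using wij True j0 by simp
    then show ?thesis unfolding inS1_def by blast
  next
    case False
    have "a * b - a - b - w = (- 1 - i) * a + (a - 1 - j) * b" using wij by (simp add: algebra_simps)
    then have "a * b - a - b - w = int (nat (- 1 - i)) * a + int (nat (a - 1 - j)) * b"
      using False j0 by simp
    then show ?thesis unfolding inS1_def by blast
  qed
qed

lemma S1_sym:
  fixes a b :: int
  assumes "a > 0" "b > 0" "gcd a b = 1"
  shows "inS1 a b w \<longleftrightarrow> \<not> inS1 a b (a * b - a - b - w)"
  using S1_not_both[OF assms] S1_one[OF assms] by blast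

definition inS :: "int \<Rightarrow> int \<Rightarrow> int \<Rightarrow> int \<Rightarrow> int \<Rightarrow> bool" where
  "inS a b c d z \<longleftrightarrow> (\<exists>i j l::nat. z = int i * (d * a) + int j * (d * b) + int l * c)"

lemma S_char:
  fixes a b c d :: int
  assumes d: "d > 0" and cd: "gcd c d = 1" and cS: "inS1 a b c"
    and l: "0 \<le> l" "l < d" and dv: "d dvd z - l * c"
  shows "inS a b c d z \<longleftrightarrow> inS1 a b ((z - l * c) div d)"
proof
  assume "inS1 a b ((z - l * c) div d)"
  then obtain i j :: nat where ij: "(z - l * c) div d = int i * a + int j * b" unfolding inS1_def by blast
  have "z - l * c = d * ((z - l * c) div d)" using dv by simp
  then have "z = int i * (d * a) + int j * (d * b) + int (nat l) * c" using ij l by (simp add: algebra_simps)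
  then show "inS a b c d z" unfolding inS_def by blast
next
  assume "inS a b c d z"
  then obtain i j l' :: nat where z: "z = int i * (d * a) + int j * (d * b) + int l' * c" unfolding inS_def by blast
  obtain i0 j0 :: nat where c: "c = int i0 * a + int j0 * b" using cS unfolding inS1_def by blast
  have "z - int l' * c = d * (int i * a + int j * b)" using z by (simp add: algebra_simps)
  then have "d dvd (z - int l' * c)" by simp
  then have "d dvd (z - l * c) - (z - int l' * c)" using dv by (rule dvd_diff[rotated])
  moreover have "(z - l * c) - (z - int l' * c) = (int l' - l) * c" by (simp add: algebra_simps)
  ultimately have "d dvd (int l' - l) * c" by simp
  then have "d dvd (int l' - l)" using cd by (metis coprime_dvd_mult_left_iff coprime_iff_gcd_eq_1 gcd.commute)
  then obtain t where t: "int l' - l = d * t" by blast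
  have "t \<ge> 0"
  proof (rule ccontr)
    assume "\<not> t \<ge> 0"
    then have "t \<le> -1" by simp
    then have "d * t \<le> d * (-1)" using d by (intro mult_left_mono) auto
    then show False using t l by linarith
  qed
  have "z - l * c = d * (int i * a + int j * b + t * c)" using z t by (simp add: algebra_simps)
  then have "(z - l * c) div d = int i * a + int j * b + t * c" using d by simp
  also have "\<dots> = int (i + nat t * i0) * a + int (j + nat t * j0) * b" using c \<open>t \<ge> 0\<close> by (simp add: algebra_simps)
  finally show "inS1 a b ((z - l * c) div d)" unfolding inS1_def by blast
qed

lemma S_sym:
  fixes a b c d :: int
  assumes a: "a > 0" and b: "b > 0" and g: "gcd a b = 1"
    and d: "d > 0" and cd: "gcd c d = 1" and cS: "inS1 a b c"
  shows "inS a b c d z \<longleftrightarrow> \<not> inS a b c d (d * (a * b - a - b) + (d - 1) * c - z)"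
proof -
  obtain u v where uv: "u * c + v * d = 1" using bezout_int[of c d] cd by auto
  define l where "l = (z * u) mod d"
  have l: "0 \<le> l" "l < d" unfolding l_def using d by auto
  have dv: "d dvd z - l * c"
  proof -
    have "z - l * c = z * (u * c + v * d) - l * c" using uv by simp
    also have "\<dots> = (z * u - l) * c + d * (z * v)" by (simp add: algebra_simps)
    finally show ?thesis unfolding l_def by (metis dvd_add dvd_mult dvd_mult2 dvd_triv_left mod_0_imp_dvd mod_diff_left_eq diff_self mod_0 dvd_minus_mod)
  qed
  let ?F = "d * (a * b - a - b) + (d - 1) * c"
  let ?l' = "d - 1 - l"
  have l': "0 \<le> ?l'" "?l' < d" using l by auto
  have e: "?F - z - ?l' * c = d * (a * b - a - b) - (z - l * c)" by (simp add: algebra_simps)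
  obtain k where k: "z - l * c = d * k" using dv by blast
  have dv': "d dvd ?F - z - ?l' * c" using e k by (simp add: algebra_simps)
  have "(?F - z - ?l' * c) div d = (a * b - a - b) - (z - l * c) div d"
    using e k d by (simp add: algebra_simps)
  then have "inS a b c d (?F - z) \<longleftrightarrow> inS1 a b ((a * b - a - b) - (z - l * c) div d)"
    using S_char[OF d cd cS l' dv'] by simp
  moreover have "inS a b c d z \<longleftrightarrow> inS1 a b ((z - l * c) div d)"
    using S_char[OF d cd cS l dv] .
  moreover have "inS1 a b ((z - l * c) div d) \<longleftrightarrow> \<not> inS1 a b ((a * b - a - b) - (z - l * c) div d)"
    using S1_sym[OF a b g] by blast
  ultimately show ?thesis by blast
qed



lemma inH_sg3:
  "inH (sg3 (d * a) (d * b) c) z \<longleftrightarrow> inS (int a) (int b) (int c) (int d) z"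
proof
  assume "inH (sg3 (d * a) (d * b) c) z"
  then have z0: "z \<ge> 0" and "nat z \<in> sg3 (d * a) (d * b) c" unfolding inH_def by auto
  then obtain i j l where "nat z = i * (d * a) + j * (d * b) + l * c" unfolding sg3_def by blast
  then have "int (nat z) = int (i * (d * a) + j * (d * b) + l * c)" by simp
  then have "z = int i * (int d * int a) + int j * (int d * int b) + int l * int c" using z0 by simp
  then show "inS (int a) (int b) (int c) (int d) z" unfolding inS_def by blast
next
  assume "inS (int a) (int b) (int c) (int d) z"
  then obtain i j l :: nat where z: "z = int i * (int d * int a) + int j * (int d * int b) + int l * int c"
    unfolding inS_def by blast
  then have zz: "z = int (i * (d * a) + j * (d * b) + l * c)" by simp
  have "z \<ge> 0" "nat z = i * (d * a) + j * (d * b) + l * c" by (subst zz, simp only: nat_int of_nat_0_le_iff)+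
  then show "inH (sg3 (d * a) (d * b) c) z" unfolding inH_def sg3_def by blast
qed

theorem corollary4p4:
  fixes a b c d :: nat
  assumes "a > 0" and "b > 0" and "gcd a b = 1"
    and "card (min_gens (sg2 a b)) = 2"
    and "c \<in> sg2 a b" and "c > 0" and "c \<notin> {a, b}"
    and "d > 1" and "gcd c d = 1"
  shows "gorenstein_quot (sg3 (d * a) (d * b) c) ({0} :: 'k::field poly set)
    \<and> finite (gor_ideals (sg3 (d * a) (d * b) c) :: 'k poly set set)
    \<and> int (card (gor_ideals (sg3 (d * a) (d * b) c) :: 'k poly set set))
        = int d * (int a * int b - int a - int b) + (int d - 1) * int c + 1"
proof -
  let ?A = "int a" and ?B = "int b" and ?C = "int c" and ?D = "int d"
  define Fi where "Fi = ?D * (?A * ?B - ?A - ?B) + (?D - 1) * ?C"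
  let ?H = "sg3 (d * a) (d * b) c"
  have Fi0: "Fi \<ge> 0"
  proof (cases "a = 1 \<or> b = 1")
    case True
    then have F1: "?A * ?B - ?A - ?B = -1" by auto
    have "c \<noteq> 1" using True assms(7) by auto
    then have "?C \<ge> 2" using assms(6) by simp
    then have "(?D - 1) * ?C \<ge> (?D - 1) * 2" using assms(8) by (intro mult_left_mono) auto
    then show ?thesis unfolding Fi_def F1 using assms(8) by simp
  next
    case False
    then have "?A \<ge> 2" "?B \<ge> 2" using assms(1,2) by auto
    then have "(?A - 1) * (?B - 1) \<ge> 1 * 1" by (intro mult_mono) auto
    then have "?A * ?B - ?A - ?B \<ge> 0" by (simp add: algebra_simps)
    then have "?D * (?A * ?B - ?A - ?B) \<ge> 0" by simp
    moreover have "(?D - 1) * ?C \<ge> 0" using assms(8) by simp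
    ultimately show ?thesis unfolding Fi_def by linarith
  qed
  have cS: "inS1 ?A ?B ?C"
  proof -
    obtain i j where "c = i * a + j * b" using assms(5) unfolding sg2_def by blast
    then have "?C = int i * ?A + int j * ?B" by simp
    then show ?thesis unfolding inS1_def by blast
  qed
  have gab: "gcd ?A ?B = 1" using assms(3) by (metis gcd_int_int_eq of_nat_1)
  have gcd': "gcd ?C ?D = 1" using assms(9) by (metis gcd_int_int_eq of_nat_1)
  interpret symsg ?H "nat Fi"
  proof
    show "0 \<in> ?H" unfolding sg3_def by (rule CollectI, rule exI[of _ 0], rule exI[of _ 0], rule exI[of _ 0]) simp
    fix x y assume "x \<in> ?H" "y \<in> ?H"
    then obtain i j l i' j' l' where "x = i * (d * a) + j * (d * b) + l * c" "y = i' * (d * a) + j' * (d * b) + l' * c"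
      unfolding sg3_def by blast
    then have "x + y = (i + i') * (d * a) + (j + j') * (d * b) + (l + l') * c" by (simp add: algebra_simps)
    then show "x + y \<in> ?H" unfolding sg3_def by blast
  next
    fix z
    have "int (nat Fi) = Fi" using Fi0 by simp
    then show "inH ?H z \<longleftrightarrow> \<not> inH ?H (int (nat Fi) - z)"
      unfolding inH_sg3 Fi_def using S_sym[OF _ _ gab _ gcd' cS, of z] assms(1,2,8) by simp
  qed
  have M: "gorenstein_quot ?H ({0} :: 'k::field poly set)
   \<and> finite (gor_ideals ?H :: 'k poly set set)
   \<and> card (gor_ideals ?H :: 'k poly set set) = nat Fi + 1" by (rule main_generic)
  then have "int (card (gor_ideals ?H :: 'k poly set set)) = Fi + 1" using Fi0 by simp
  then show ?thesis using M unfolding Fi_def by simp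
qed


end
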